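(* Let $A,B\in M_\ell(F)$ commute, $H_X=(A\ \ B)$, $H_Z=(B^T\ \ -A^T)$, and fix idempotents $E_A,F_A$ associated with $A$ and $E_B,F_B$ associated with $B$. Define $$H_X^{(L)}=\begin{pmatrix}A&B\\0&I-E_A\end{pmatrix},\quad H_X^{(R)}=\begin{pmatrix}A&B\\ I-E_B&0\end{pmatrix},\quad H_Z^{(L)}=\begin{pmatrix}B^T&-A^T\\ (I-F_A)^T&0\end{pmatrix},\quad H_Z^{(R)}=\begin{pmatrix}B^T&-A^T\\ 0&(I-F_B)^T\end{pmatrix}.$$ Then for each $\mu\in\{L,R\}$, $$d_Z\bigl(\mathrm{CSS}(H_X,H_Z)\bigr)=\min\Bigl\{d_Z\bigl(\mathrm{CSS}(H_X^{(\mu)},H_Z)\bigr),\ d_Z\bigl(\mathrm{CSS}(H_X,H_Z^{(\mu)})\bigr)\Bigr\}.$$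
   Context: $F=\mathbb F_q$ is a finite field. For $H_X,H_Z$ with $H_XH_Z^T=0$, $d_Z(\mathrm{CSS}(H_X,H_Z))=\min\{\mathrm{wgt}(c):c\in C_{H_X}^\perp\setminus C_{H_Z}\}$, where $C_H$ is the row space of $H$, $C_H^\perp$ its orthogonal complement, and the minimum of the empty set is $\infty$. Idempotents associated with $A$: any $E_A,F_A$ with $E_A^2=E_A$, $F_A^2=F_A$, $\mathrm{rank}E_A=\mathrm{rank}F_A=\mathrm{rank}A$, $E_AA=AF_A=A$; similarly $E_B,F_B$ for $B$. (All pairs of matrices above satisfy the CSS orthogonality condition.) *)

theory Defs
  imports "Jordan_Normal_Form.DL_Rank" "HOL-Library.Extended_Nat"
begin

definition hcat :: "'a::zero mat \<Rightarrow> 'a mat \<Rightarrow> 'a mat" where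
  "hcat A B = four_block_mat A B (0\<^sub>m 0 (dim_col A)) (0\<^sub>m 0 (dim_col B))"

definition rowsp :: "'a::field mat \<Rightarrow> 'a vec set" where
  "rowsp H = vec_space.row_space (dim_col H) H"

definition orth :: "nat \<Rightarrow> 'a::field vec set \<Rightarrow> 'a vec set" where
  "orth n C = {c \<in> carrier_vec n. \<forall>x\<in>C. x \<bullet> c = 0}"

definition wgt :: "'a::zero vec \<Rightarrow> nat" where
  "wgt c = card {i. i < dim_vec c \<and> c $ i \<noteq> 0}"

text \<open>Z-distance of CSS(HX,HZ); the infimum of the empty set is \<infinity>.\<close>
definition dZ :: "'a::field mat \<Rightarrow> 'a mat \<Rightarrow> enat" where
  "dZ HX HZ = (INF c \<in> orth (dim_col HX) (rowsp HX) - rowsp HZ. enat (wgt c))"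

definition assoc_idems :: "nat \<Rightarrow> 'a::field mat \<Rightarrow> 'a mat \<Rightarrow> 'a mat \<Rightarrow> bool" where
  "assoc_idems l E F A \<longleftrightarrow> E \<in> carrier_mat l l \<and> F \<in> carrier_mat l l \<and>
     E * E = E \<and> F * F = F \<and>
     vec_space.rank l E = vec_space.rank l A \<and> vec_space.rank l F = vec_space.rank l A \<and>
     E * A = A \<and> A * F = A"

end

theory Submission
  imports Defs
begin

lemma zero_mat_mult_vec[simp]: "v \<in> carrier_vec n \<Longrightarrow> 0\<^sub>m r n *\<^sub>v v = 0\<^sub>v r"
  by (rule eq_vecI) (auto simp: scalar_prod_def)

lemma mat_mult_zero_vec[simp]: "M \<in> carrier_mat r n \<Longrightarrow> M *\<^sub>v 0\<^sub>v n = (0\<^sub>v r :: 'a::comm_ring_1 vec)"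
  by (rule eq_vecI) (auto simp: scalar_prod_def)

lemma append_zero_iff:
  assumes "x \<in> carrier_vec n1" "y \<in> carrier_vec n2"
  shows "(x @\<^sub>v y = 0\<^sub>v (n1+n2)) \<longleftrightarrow> x = 0\<^sub>v n1 \<and> y = 0\<^sub>v n2"
proof -
  have "0\<^sub>v (n1+n2) = (0\<^sub>v n1 :: 'a::zero vec) @\<^sub>v 0\<^sub>v n2" by (rule eq_vecI) auto
  then show ?thesis using assms append_vec_eq[of x n1 "0\<^sub>v n1" y "0\<^sub>v n2"] by simp
qed

lemma vec0_eq: "(y :: 'a::zero vec) \<in> carrier_vec 0 \<Longrightarrow> y = 0\<^sub>v 0"
  by (rule eq_vecI) auto

lemma split_vec:
  assumes "c \<in> carrier_vec (n+m)"
  obtains u v where "u \<in> carrier_vec n" "v \<in> carrier_vec m" "c = u @\<^sub>v v"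
  using vec_first_last_append[OF assms] vec_first_carrier vec_last_carrier by metis

lemma orth_rowsp:
  fixes H :: "'a::field mat"
  assumes H: "H \<in> carrier_mat r n"
  shows "orth n (rowsp H) = {c \<in> carrier_vec n. H *\<^sub>v c = 0\<^sub>v r}"
proof -
  have rs: "rowsp H = {w\<in>carrier_vec n. \<exists>y\<in>carrier_vec r. H\<^sup>T *\<^sub>v y = w}"
    unfolding rowsp_def using vec_space.row_space_eq[OF H] H by auto
  show ?thesis
  proof (intro equalityI subsetI)
    fix c assume c: "c \<in> orth n (rowsp H)"
    then have cc: "c \<in> carrier_vec n" and o: "\<And>x. x \<in> rowsp H \<Longrightarrow> x \<bullet> c = 0"
      unfolding orth_def by auto
    have "H *\<^sub>v c = 0\<^sub>v r"
    proof (rule eq_vecI)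
      fix i assume i: "i < dim_vec (0\<^sub>v r :: 'a vec)"
      then have ir: "i < r" by simp
      have "H\<^sup>T *\<^sub>v unit_vec r i \<in> rowsp H" unfolding rs using H
        by (auto intro!: bexI[of _ "unit_vec r i"])
      then have "(H\<^sup>T *\<^sub>v unit_vec r i) \<bullet> c = 0" by (rule o)
      also have "(H\<^sup>T *\<^sub>v unit_vec r i) \<bullet> c = unit_vec r i \<bullet> (H *\<^sub>v c)"
        using transpose_vec_mult_scalar[OF H cc, of "unit_vec r i"] by simp
      also have "\<dots> = (H *\<^sub>v c) $ i" using H cc by (intro scalar_prod_left_unit[OF _ ir]) auto
      finally show "(H *\<^sub>v c) $ i = 0\<^sub>v r $ i" using ir by simp
    qed (use H in auto)
    then show "c \<in> {c \<in> carrier_vec n. H *\<^sub>v c = 0\<^sub>v r}" using cc by auto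
  next
    fix c assume "c \<in> {c \<in> carrier_vec n. H *\<^sub>v c = 0\<^sub>v r}"
    then have cc: "c \<in> carrier_vec n" and k: "H *\<^sub>v c = 0\<^sub>v r" by auto
    have "x \<bullet> c = 0" if xr: "x \<in> rowsp H" for x
    proof -
      obtain y where y: "y \<in> carrier_vec r" "x = H\<^sup>T *\<^sub>v y" using xr unfolding rs by auto
      have "x \<bullet> c = y \<bullet> (H *\<^sub>v c)" using transpose_vec_mult_scalar[OF H cc y(1)] y by simp
      also have "\<dots> = 0" using k y(1) by (simp add: scalar_prod_right_zero)
      finally show ?thesis .
    qed
    then show "c \<in> orth n (rowsp H)" unfolding orth_def using cc by auto
  qed
qed

lemma rowsp_eq:
  fixes H :: "'a::field mat"
  assumes H: "H \<in> carrier_mat r n"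
  shows "rowsp H = {H\<^sup>T *\<^sub>v y | y. y \<in> carrier_vec r}"
  unfolding rowsp_def using vec_space.row_space_eq[OF H] H by auto

lemma dZ_split:
  fixes HX HX' HZ HZ' :: "'a::field mat"
  assumes "dim_col HX' = dim_col HX"
    and "orth (dim_col HX) (rowsp HX') \<subseteq> orth (dim_col HX) (rowsp HX)"
    and "rowsp HZ \<subseteq> rowsp HZ'"
    and "\<And>c. c \<in> orth (dim_col HX) (rowsp HX) \<Longrightarrow> c \<in> rowsp HZ' \<Longrightarrow> c \<in> orth (dim_col HX) (rowsp HX')"
  shows "dZ HX HZ = min (dZ HX' HZ) (dZ HX HZ')"
proof -
  let ?K = "orth (dim_col HX) (rowsp HX)" and ?K' = "orth (dim_col HX) (rowsp HX')"
  have "?K - rowsp HZ = (?K' - rowsp HZ) \<union> (?K - rowsp HZ')"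
    using assms by blast
  then show ?thesis unfolding dZ_def assms(1) by (simp add: INF_union inf_min)
qed


lemma mat_kill:
  fixes M N :: "'a::field mat"
  assumes "M \<in> carrier_mat l l" "N \<in> carrier_mat l l" "E \<in> carrier_mat l l" "E * N = N"
    "y \<in> carrier_vec l"
  shows "(1\<^sub>m l - E) *\<^sub>v (N *\<^sub>v y) = 0\<^sub>v l"
proof -
  have "(1\<^sub>m l - E) * N = N - E * N" using assms
    by (simp add: minus_mult_distrib_mat[of _ l l])
  also have "\<dots> = 0\<^sub>m l l" using assms by (simp add: minus_r_inv_mat)
  finally have "(1\<^sub>m l - E) * N = 0\<^sub>m l l" .
  then show ?thesis using assms
    by (metis assoc_mult_mat_vec minus_carrier_mat one_carrier_mat zero_mat_mult_vec)
qed

lemma testL: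
  fixes A B EA FA :: "'a::field mat"
  assumes A: "A \<in> carrier_mat l l" and B: "B \<in> carrier_mat l l"
    and EA: "EA \<in> carrier_mat l l" and FA: "FA \<in> carrier_mat l l" and EAA: "EA * A = A"
  defines "HX \<equiv> hcat A B"
    and "HZ \<equiv> hcat B\<^sup>T (- A\<^sup>T)"
    and "HXL \<equiv> four_block_mat A B (0\<^sub>m l l) (1\<^sub>m l - EA)"
    and "HZL \<equiv> four_block_mat B\<^sup>T (- A\<^sup>T) (1\<^sub>m l - FA)\<^sup>T (0\<^sub>m l l)"
  shows "dZ HX HZ = min (dZ HXL HZ) (dZ HX HZL)"
proof -
  have IEA: "1\<^sub>m l - EA \<in> carrier_mat l l" using EA by (rule minus_carrier_mat)
  have z0: "(0\<^sub>m 0 l :: 'a mat) \<in> carrier_mat 0 l" by simp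
  have FAt: "(1\<^sub>m l - FA)\<^sup>T \<in> carrier_mat l l" using minus_carrier_mat[OF FA] by (metis transpose_carrier_mat)
  have IFA: "1\<^sub>m l - FA \<in> carrier_mat l l" using FA by (rule minus_carrier_mat)
  have mA: "- A \<in> carrier_mat l l" using A by simp
  have Bt: "B\<^sup>T \<in> carrier_mat l l" using B by simp
  have mAt: "- A\<^sup>T \<in> carrier_mat l l" using A by simp
  have cHX: "HX \<in> carrier_mat (l+0) (l+l)" unfolding HX_def hcat_def using A B by auto
  have cHZ: "HZ \<in> carrier_mat (l+0) (l+l)" unfolding HZ_def hcat_def using A B by auto
  have cHXL: "HXL \<in> carrier_mat (l+l) (l+l)" unfolding HXL_def using A B EA by auto
  have cHZL: "HZL \<in> carrier_mat (l+l) (l+l)" unfolding HZL_def using A B FA by auto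
  have dHX: "dim_col HX = l+l" using cHX by auto
  have kHX: "HX *\<^sub>v (u @\<^sub>v v) = 0\<^sub>v (l+0) \<longleftrightarrow> A *\<^sub>v u + B *\<^sub>v v = 0\<^sub>v l"
    if "u \<in> carrier_vec l" "v \<in> carrier_vec l" for u v
  proof -
    have "HX *\<^sub>v (u @\<^sub>v v) = (A *\<^sub>v u + B *\<^sub>v v) @\<^sub>v (0\<^sub>m 0 l *\<^sub>v u + 0\<^sub>m 0 l *\<^sub>v v)"
      unfolding HX_def hcat_def using A B that by (simp add: four_block_mat_mult_vec[OF A B z0 z0])
    moreover have "0\<^sub>m 0 l *\<^sub>v u + 0\<^sub>m 0 l *\<^sub>v v = (0\<^sub>v 0 :: 'a vec)"
      by (rule vec0_eq) (use that in auto)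
    ultimately have "HX *\<^sub>v (u @\<^sub>v v) = (A *\<^sub>v u + B *\<^sub>v v) @\<^sub>v 0\<^sub>v 0" by simp
    then show ?thesis using that A B append_zero_iff[of "A *\<^sub>v u + B *\<^sub>v v" l "0\<^sub>v 0" 0] by simp
  qed
  have kHXL: "HXL *\<^sub>v (u @\<^sub>v v) = 0\<^sub>v (l+l) \<longleftrightarrow> A *\<^sub>v u + B *\<^sub>v v = 0\<^sub>v l \<and> (1\<^sub>m l - EA) *\<^sub>v v = 0\<^sub>v l"
    if "u \<in> carrier_vec l" "v \<in> carrier_vec l" for u v
  proof -
    have "HXL *\<^sub>v (u @\<^sub>v v) = (A *\<^sub>v u + B *\<^sub>v v) @\<^sub>v (0\<^sub>m l l *\<^sub>v u + (1\<^sub>m l - EA) *\<^sub>v v)"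
      unfolding HXL_def by (rule four_block_mat_mult_vec[OF A B zero_carrier_mat IEA that])
    moreover have "0\<^sub>m l l *\<^sub>v u + (1\<^sub>m l - EA) *\<^sub>v v = (1\<^sub>m l - EA) *\<^sub>v v"
      unfolding zero_mat_mult_vec[OF that(1)] by (rule left_zero_vec) (use IEA that in auto)
    ultimately have "HXL *\<^sub>v (u @\<^sub>v v) = (A *\<^sub>v u + B *\<^sub>v v) @\<^sub>v ((1\<^sub>m l - EA) *\<^sub>v v)" by simp
    moreover have c1: "A *\<^sub>v u + B *\<^sub>v v \<in> carrier_vec l" using A B that by auto
    moreover have c2: "(1\<^sub>m l - EA) *\<^sub>v v \<in> carrier_vec l" using IEA that by auto
    ultimately show ?thesis by (simp only: append_zero_iff[OF c1 c2])
  qed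
  have tHZ: "HZ\<^sup>T = four_block_mat B (0\<^sub>m l 0) (- A) (0\<^sub>m l 0)"
    unfolding HZ_def hcat_def using A B
    by (simp add: transpose_four_block_mat[OF Bt mAt z0 z0] transpose_uminus)
  have tHZL: "HZL\<^sup>T = four_block_mat B (1\<^sub>m l - FA) (- A) (0\<^sub>m l l)"
    unfolding HZL_def using A B FA
    by (simp add: transpose_four_block_mat[OF Bt mAt FAt zero_carrier_mat] transpose_uminus)
  have rHZ: "rowsp HZ = {HZ\<^sup>T *\<^sub>v y | y. y \<in> carrier_vec (l+0)}" by (rule rowsp_eq[OF cHZ])
  have rHZL: "rowsp HZL = {HZL\<^sup>T *\<^sub>v y | y. y \<in> carrier_vec (l+l)}" by (rule rowsp_eq[OF cHZL])
  have oHX: "orth (dim_col HX) (rowsp HX) = {c \<in> carrier_vec (l+l). HX *\<^sub>v c = 0\<^sub>v (l+0)}"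
    unfolding dHX by (rule orth_rowsp[OF cHX])
  have oHXL: "orth (dim_col HX) (rowsp HXL) = {c \<in> carrier_vec (l+l). HXL *\<^sub>v c = 0\<^sub>v (l+l)}"
    unfolding dHX by (rule orth_rowsp[OF cHXL])
  show ?thesis
  proof (rule dZ_split)
    show "dim_col HXL = dim_col HX" using cHXL cHX by auto
    show "orth (dim_col HX) (rowsp HXL) \<subseteq> orth (dim_col HX) (rowsp HX)"
    proof
      fix c assume "c \<in> orth (dim_col HX) (rowsp HXL)"
      then have c: "c \<in> carrier_vec (l+l)" "HXL *\<^sub>v c = 0\<^sub>v (l+l)" unfolding oHXL by auto
      obtain u v where uv: "u \<in> carrier_vec l" "v \<in> carrier_vec l" "c = u @\<^sub>v v"
        using split_vec[OF c(1)] .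
      show "c \<in> orth (dim_col HX) (rowsp HX)" unfolding oHX using c uv kHX kHXL by auto
    qed
    show "rowsp HZ \<subseteq> rowsp HZL"
    proof
      fix x assume "x \<in> rowsp HZ"
      then obtain y where y: "y \<in> carrier_vec (l+0)" "x = HZ\<^sup>T *\<^sub>v y" unfolding rHZ by auto
      obtain y1 y0 where yy: "y1 \<in> carrier_vec l" "y0 \<in> carrier_vec 0" "y = y1 @\<^sub>v y0"
        using split_vec[OF y(1)] .
      have "x = (B *\<^sub>v y1 + 0\<^sub>m l 0 *\<^sub>v y0) @\<^sub>v (- A *\<^sub>v y1 + 0\<^sub>m l 0 *\<^sub>v y0)"
        unfolding y(2) tHZ yy(3) using A B yy
        by (simp add: four_block_mat_mult_vec[of B l l "0\<^sub>m l 0" 0 "- A" l])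
      also have "\<dots> = HZL\<^sup>T *\<^sub>v (y1 @\<^sub>v 0\<^sub>v l)"
        unfolding tHZL
        by (subst four_block_mat_mult_vec[OF B IFA mA zero_carrier_mat yy(1) zero_carrier_vec]) (use A B IFA yy in simp)
      finally show "x \<in> rowsp HZL" unfolding rHZL using yy by auto
    qed
    fix c assume "c \<in> orth (dim_col HX) (rowsp HX)" and cr: "c \<in> rowsp HZL"
    then have c: "c \<in> carrier_vec (l+l)" "HX *\<^sub>v c = 0\<^sub>v (l+0)" unfolding oHX by auto
    obtain u v where uv: "u \<in> carrier_vec l" "v \<in> carrier_vec l" "c = u @\<^sub>v v"
      using split_vec[OF c(1)] .
    obtain y where y: "y \<in> carrier_vec (l+l)" "c = HZL\<^sup>T *\<^sub>v y" using cr unfolding rHZL by auto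
    obtain y1 y2 where yy: "y1 \<in> carrier_vec l" "y2 \<in> carrier_vec l" "y = y1 @\<^sub>v y2"
      using split_vec[OF y(1)] .
    have "u @\<^sub>v v = (B *\<^sub>v y1 + (1\<^sub>m l - FA) *\<^sub>v y2) @\<^sub>v (- A *\<^sub>v y1 + 0\<^sub>m l l *\<^sub>v y2)"
      unfolding uv(3)[symmetric] y(2) tHZL yy(3) using A B FA yy
      by (subst four_block_mat_mult_vec[OF B IFA mA zero_carrier_mat yy(1) yy(2)]) (use A B IFA yy in simp)
    moreover have cw: "B *\<^sub>v y1 + (1\<^sub>m l - FA) *\<^sub>v y2 \<in> carrier_vec l" using B IFA yy by auto
    ultimately have "v = - A *\<^sub>v y1 + 0\<^sub>m l l *\<^sub>v y2" using append_vec_eq[OF uv(1) cw] by blast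
    then have "v = - A *\<^sub>v y1" using yy A by simp
    then have "(1\<^sub>m l - EA) *\<^sub>v v = 0\<^sub>v l"
      using mat_kill[of A l "- A" EA y1] A EA EAA yy by simp
    then show "c \<in> orth (dim_col HX) (rowsp HXL)" unfolding oHXL oHX using c uv kHX kHXL by auto
  qed
qed

lemma testR:
  fixes A B EB FB :: "'a::field mat"
  assumes A: "A \<in> carrier_mat l l" and B: "B \<in> carrier_mat l l"
    and EB: "EB \<in> carrier_mat l l" and FB: "FB \<in> carrier_mat l l" and EBB: "EB * B = B"
  defines "HX \<equiv> hcat A B"
    and "HZ \<equiv> hcat B\<^sup>T (- A\<^sup>T)"
    and "HXR \<equiv> four_block_mat A B (1\<^sub>m l - EB) (0\<^sub>m l l)"
    and "HZR \<equiv> four_block_mat B\<^sup>T (- A\<^sup>T) (0\<^sub>m l l) (1\<^sub>m l - FB)\<^sup>T"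
  shows "dZ HX HZ = min (dZ HXR HZ) (dZ HX HZR)"
proof -
  have IEB: "1\<^sub>m l - EB \<in> carrier_mat l l" using EB by (rule minus_carrier_mat)
  have z0: "(0\<^sub>m 0 l :: 'a mat) \<in> carrier_mat 0 l" by simp
  have FBt: "(1\<^sub>m l - FB)\<^sup>T \<in> carrier_mat l l" using minus_carrier_mat[OF FB] by (metis transpose_carrier_mat)
  have IFB: "1\<^sub>m l - FB \<in> carrier_mat l l" using FB by (rule minus_carrier_mat)
  have mA: "- A \<in> carrier_mat l l" using A by simp
  have Bt: "B\<^sup>T \<in> carrier_mat l l" using B by simp
  have mAt: "- A\<^sup>T \<in> carrier_mat l l" using A by simp
  have cHX: "HX \<in> carrier_mat (l+0) (l+l)" unfolding HX_def hcat_def using A B by auto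
  have cHZ: "HZ \<in> carrier_mat (l+0) (l+l)" unfolding HZ_def hcat_def using A B by auto
  have cHXR: "HXR \<in> carrier_mat (l+l) (l+l)" unfolding HXR_def using A B EB by auto
  have cHZR: "HZR \<in> carrier_mat (l+l) (l+l)" unfolding HZR_def using A B FB by auto
  have dHX: "dim_col HX = l+l" using cHX by auto
  have kHX: "HX *\<^sub>v (u @\<^sub>v v) = 0\<^sub>v (l+0) \<longleftrightarrow> A *\<^sub>v u + B *\<^sub>v v = 0\<^sub>v l"
    if "u \<in> carrier_vec l" "v \<in> carrier_vec l" for u v
  proof -
    have "HX *\<^sub>v (u @\<^sub>v v) = (A *\<^sub>v u + B *\<^sub>v v) @\<^sub>v (0\<^sub>m 0 l *\<^sub>v u + 0\<^sub>m 0 l *\<^sub>v v)"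
      unfolding HX_def hcat_def using A B that by (simp add: four_block_mat_mult_vec[OF A B z0 z0])
    moreover have "0\<^sub>m 0 l *\<^sub>v u + 0\<^sub>m 0 l *\<^sub>v v = (0\<^sub>v 0 :: 'a vec)"
      by (rule vec0_eq) (use that in auto)
    ultimately have "HX *\<^sub>v (u @\<^sub>v v) = (A *\<^sub>v u + B *\<^sub>v v) @\<^sub>v 0\<^sub>v 0" by simp
    then show ?thesis using that A B append_zero_iff[of "A *\<^sub>v u + B *\<^sub>v v" l "0\<^sub>v 0" 0] by simp
  qed
  have kHXR: "HXR *\<^sub>v (u @\<^sub>v v) = 0\<^sub>v (l+l) \<longleftrightarrow> A *\<^sub>v u + B *\<^sub>v v = 0\<^sub>v l \<and> (1\<^sub>m l - EB) *\<^sub>v u = 0\<^sub>v l"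
    if "u \<in> carrier_vec l" "v \<in> carrier_vec l" for u v
  proof -
    have "HXR *\<^sub>v (u @\<^sub>v v) = (A *\<^sub>v u + B *\<^sub>v v) @\<^sub>v ((1\<^sub>m l - EB) *\<^sub>v u + 0\<^sub>m l l *\<^sub>v v)"
      unfolding HXR_def by (rule four_block_mat_mult_vec[OF A B IEB zero_carrier_mat that])
    moreover have "(1\<^sub>m l - EB) *\<^sub>v u + 0\<^sub>m l l *\<^sub>v v = (1\<^sub>m l - EB) *\<^sub>v u"
      unfolding zero_mat_mult_vec[OF that(2)] by (rule right_zero_vec) (use IEB that in auto)
    ultimately have "HXR *\<^sub>v (u @\<^sub>v v) = (A *\<^sub>v u + B *\<^sub>v v) @\<^sub>v ((1\<^sub>m l - EB) *\<^sub>v u)" by simp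
    moreover have c1: "A *\<^sub>v u + B *\<^sub>v v \<in> carrier_vec l" using A B that by auto
    moreover have c2: "(1\<^sub>m l - EB) *\<^sub>v u \<in> carrier_vec l" using IEB that by auto
    ultimately show ?thesis by (simp only: append_zero_iff[OF c1 c2])
  qed
  have tHZ: "HZ\<^sup>T = four_block_mat B (0\<^sub>m l 0) (- A) (0\<^sub>m l 0)"
    unfolding HZ_def hcat_def using A B
    by (simp add: transpose_four_block_mat[OF Bt mAt z0 z0] transpose_uminus)
  have tHZR: "HZR\<^sup>T = four_block_mat B (0\<^sub>m l l) (- A) (1\<^sub>m l - FB)"
    unfolding HZR_def using A B FB
    by (simp add: transpose_four_block_mat[OF Bt mAt zero_carrier_mat FBt] transpose_uminus)
  have rHZ: "rowsp HZ = {HZ\<^sup>T *\<^sub>v y | y. y \<in> carrier_vec (l+0)}" by (rule rowsp_eq[OF cHZ])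
  have rHZR: "rowsp HZR = {HZR\<^sup>T *\<^sub>v y | y. y \<in> carrier_vec (l+l)}" by (rule rowsp_eq[OF cHZR])
  have oHX: "orth (dim_col HX) (rowsp HX) = {c \<in> carrier_vec (l+l). HX *\<^sub>v c = 0\<^sub>v (l+0)}"
    unfolding dHX by (rule orth_rowsp[OF cHX])
  have oHXR: "orth (dim_col HX) (rowsp HXR) = {c \<in> carrier_vec (l+l). HXR *\<^sub>v c = 0\<^sub>v (l+l)}"
    unfolding dHX by (rule orth_rowsp[OF cHXR])
  show ?thesis
  proof (rule dZ_split)
    show "dim_col HXR = dim_col HX" using cHXR cHX by auto
    show "orth (dim_col HX) (rowsp HXR) \<subseteq> orth (dim_col HX) (rowsp HX)"
    proof
      fix c assume "c \<in> orth (dim_col HX) (rowsp HXR)"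
      then have c: "c \<in> carrier_vec (l+l)" "HXR *\<^sub>v c = 0\<^sub>v (l+l)" unfolding oHXR by auto
      obtain u v where uv: "u \<in> carrier_vec l" "v \<in> carrier_vec l" "c = u @\<^sub>v v"
        using split_vec[OF c(1)] .
      show "c \<in> orth (dim_col HX) (rowsp HX)" unfolding oHX using c uv kHX kHXR by auto
    qed
    show "rowsp HZ \<subseteq> rowsp HZR"
    proof
      fix x assume "x \<in> rowsp HZ"
      then obtain y where y: "y \<in> carrier_vec (l+0)" "x = HZ\<^sup>T *\<^sub>v y" unfolding rHZ by auto
      obtain y1 y0 where yy: "y1 \<in> carrier_vec l" "y0 \<in> carrier_vec 0" "y = y1 @\<^sub>v y0"
        using split_vec[OF y(1)] .
      have "x = (B *\<^sub>v y1 + 0\<^sub>m l 0 *\<^sub>v y0) @\<^sub>v (- A *\<^sub>v y1 + 0\<^sub>m l 0 *\<^sub>v y0)"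
        unfolding y(2) tHZ yy(3) using A B yy
        by (simp add: four_block_mat_mult_vec[of B l l "0\<^sub>m l 0" 0 "- A" l])
      also have "\<dots> = HZR\<^sup>T *\<^sub>v (y1 @\<^sub>v 0\<^sub>v l)"
        unfolding tHZR
        by (subst four_block_mat_mult_vec[OF B zero_carrier_mat mA IFB yy(1) zero_carrier_vec]) (use A B IFB yy in simp)
      finally show "x \<in> rowsp HZR" unfolding rHZR using yy by auto
    qed
    fix c assume "c \<in> orth (dim_col HX) (rowsp HX)" and cr: "c \<in> rowsp HZR"
    then have c: "c \<in> carrier_vec (l+l)" "HX *\<^sub>v c = 0\<^sub>v (l+0)" unfolding oHX by auto
    obtain u v where uv: "u \<in> carrier_vec l" "v \<in> carrier_vec l" "c = u @\<^sub>v v"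
      using split_vec[OF c(1)] .
    obtain y where y: "y \<in> carrier_vec (l+l)" "c = HZR\<^sup>T *\<^sub>v y" using cr unfolding rHZR by auto
    obtain y1 y2 where yy: "y1 \<in> carrier_vec l" "y2 \<in> carrier_vec l" "y = y1 @\<^sub>v y2"
      using split_vec[OF y(1)] .
    have "u @\<^sub>v v = (B *\<^sub>v y1 + 0\<^sub>m l l *\<^sub>v y2) @\<^sub>v (- A *\<^sub>v y1 + (1\<^sub>m l - FB) *\<^sub>v y2)"
      unfolding uv(3)[symmetric] y(2) tHZR yy(3) using A B FB yy
      by (subst four_block_mat_mult_vec[OF B zero_carrier_mat mA IFB yy(1) yy(2)]) (use A B IFB yy in simp)
    moreover have cw: "B *\<^sub>v y1 + 0\<^sub>m l l *\<^sub>v y2 \<in> carrier_vec l" using B yy by auto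
    ultimately have "u = B *\<^sub>v y1 + 0\<^sub>m l l *\<^sub>v y2" using append_vec_eq[OF uv(1) cw] by blast
    then have "u = B *\<^sub>v y1" using yy B by simp
    then have "(1\<^sub>m l - EB) *\<^sub>v u = 0\<^sub>v l"
      using mat_kill[of A l B EB y1] A B EB EBB yy by simp
    then show "c \<in> orth (dim_col HX) (rowsp HXR)" unfolding oHXR oHX using c uv kHX kHXR by auto
  qed
qed

theorem mainTheorem7:
  fixes A B EA FA EB FB :: "'a::{finite,field} mat" and l :: nat
  assumes "A \<in> carrier_mat l l" and "B \<in> carrier_mat l l"
    and "A * B = B * A"
    and "assoc_idems l EA FA A" and "assoc_idems l EB FB B"
  defines "HX \<equiv> hcat A B"
    and "HZ \<equiv> hcat B\<^sup>T (- A\<^sup>T)"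
    and "HXL \<equiv> four_block_mat A B (0\<^sub>m l l) (1\<^sub>m l - EA)"
    and "HXR \<equiv> four_block_mat A B (1\<^sub>m l - EB) (0\<^sub>m l l)"
    and "HZL \<equiv> four_block_mat B\<^sup>T (- A\<^sup>T) (1\<^sub>m l - FA)\<^sup>T (0\<^sub>m l l)"
    and "HZR \<equiv> four_block_mat B\<^sup>T (- A\<^sup>T) (0\<^sub>m l l) (1\<^sub>m l - FB)\<^sup>T"
  shows "dZ HX HZ = min (dZ HXL HZ) (dZ HX HZL) \<and>
         dZ HX HZ = min (dZ HXR HZ) (dZ HX HZR)"
proof
  have a: "EA \<in> carrier_mat l l" "FA \<in> carrier_mat l l" "EA * A = A"
    using assms(4) unfolding assoc_idems_def by auto
  have b: "EB \<in> carrier_mat l l" "FB \<in> carrier_mat l l" "EB * B = B"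
    using assms(5) unfolding assoc_idems_def by auto
  show "dZ HX HZ = min (dZ HXL HZ) (dZ HX HZL)"
    unfolding HX_def HZ_def HXL_def HZL_def by (rule testL[OF assms(1,2) a])
  show "dZ HX HZ = min (dZ HXR HZ) (dZ HX HZR)"
    unfolding HX_def HZ_def HXR_def HZR_def by (rule testR[OF assms(1,2) b])
qed

end
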